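(* Let $r\ge1$ and let $G_r(t,u,v,z)=\sum_w t^{\mathrm{length}(w)}u^{\mathrm{asc}(w)}v^{\mathrm{last}(w)}z^{\mathrm{zeros}(w)}$, summed over all ascent sequences $w=(x_1,\dots,x_n)$ with $n\ge r+1$, $x_1=\dots=x_r=0$ and $x_{r+1}=1$. Then $$(v-1-tv(1-u))\,G_r(t,u,v,z)=(v-1)t^{r+1}uvz^r+t((v-1)z-v)\,G_r(t,u,1,z)+tuv^2\,G_r(t,uv,1,z).$$
   Context: An ascent sequence of length $n$ is a sequence $(x_1,\dots,x_n)$ of nonnegative integers with $x_1=0$ and $x_i\in[0,1+\mathrm{asc}(x_1,\dots,x_{i-1})]$ for $2\le i\le n$, where $\mathrm{asc}(y_1,\dots,y_k)=|\{1\le j<k: y_j<y_{j+1}\}|$. For an ascent sequence $w$: $\mathrm{length}(w)$ is its number of entries, $\mathrm{asc}(w)$ its number of ascents, $\mathrm{last}(w)$ its rightmost entry, $\mathrm{zeros}(w)$ its number of entries equal to 0. $G_r$ is a formal power series in $t$ with polynomial coefficients in $u,v,z$; $G_r(t,u,1,z)$ and $G_r(t,uv,1,z)$ denote the substitutions $v\mapsto1$ and $(u,v)\mapsto(uv,1)$ respectively. *)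

theory Defs
  imports "HOL-Computational_Algebra.Formal_Power_Series"
begin

definition asc :: "nat list \<Rightarrow> nat" where
  "asc ys = card {j. j + 1 < length ys \<and> ys ! j < ys ! (j + 1)}"

definition ascent_seq :: "nat list \<Rightarrow> bool" where
  "ascent_seq xs \<longleftrightarrow> xs \<noteq> [] \<and> xs ! 0 = 0 \<and>
     (\<forall>i. 1 \<le> i \<and> i < length xs \<longrightarrow> xs ! i \<le> 1 + asc (take i xs))"

definition zeros :: "nat list \<Rightarrow> nat" where
  "zeros xs = length (filter (\<lambda>x. x = 0) xs)"

definition AS_r :: "nat \<Rightarrow> nat \<Rightarrow> nat list set" where
  "AS_r r n = {w. ascent_seq w \<and> length w = n \<and> r + 1 \<le> n \<and>
                  (\<forall>i<r. w ! i = 0) \<and> w ! r = 1}"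

text \<open>G_r(t,u,v,z) as a formal power series in t, with coefficients evaluated at
  u, v, z in an arbitrary commutative ring (e.g. a polynomial ring).\<close>
definition G :: "nat \<Rightarrow> 'a::comm_ring_1 \<Rightarrow> 'a \<Rightarrow> 'a \<Rightarrow> 'a fps" where
  "G r u v z = Abs_fps (\<lambda>n. \<Sum>w\<in>AS_r r n. u ^ asc w * v ^ last w * z ^ zeros w)"

end

theory Submission imports Defs begin

lemma asc_snoc:
  assumes "w \<noteq> []"
  shows "asc (w @ [x]) = asc w + (if last w < x then 1 else 0)"
proof -
  let ?S = "{j. j + 1 < length w \<and> w ! j < w ! (j + 1)}"
  let ?T = "{j. j + 1 = length w \<and> last w < x}"
  have eq: "{j. j + 1 < length (w@[x]) \<and> (w@[x]) ! j < (w@[x]) ! (j + 1)} = ?S \<union> ?T"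
  proof (rule set_eqI, rule iffI)
    fix j assume "j \<in> {j. j + 1 < length (w@[x]) \<and> (w@[x]) ! j < (w@[x]) ! (j + 1)}"
    hence j: "j + 1 < length w + 1" "(w@[x]) ! j < (w@[x]) ! (j + 1)" by auto
    show "j \<in> ?S \<union> ?T"
    proof (cases "j + 1 < length w")
      case True thus ?thesis using j by (auto simp: nth_append)
    next
      case False
      hence jj: "j = length w - 1" using j by auto
      thus ?thesis using j assms by (auto simp: nth_append last_conv_nth)
    qed
  next
    fix j assume "j \<in> ?S \<union> ?T"
    thus "j \<in> {j. j + 1 < length (w@[x]) \<and> (w@[x]) ! j < (w@[x]) ! (j + 1)}"
    proof
      assume "j \<in> ?S" thus ?thesis by (auto simp: nth_append)
    next
      assume "j \<in> ?T"
      hence "j = length w - 1" "last w < x" by auto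
      thus ?thesis using assms by (auto simp: nth_append last_conv_nth)
    qed
  qed
  have fin: "finite ?S" by (rule finite_subset[of _ "{..<length w}"]) auto
  have "?T = (if last w < x then {length w - 1} else {})" using assms by (auto)
  moreover have "?S \<inter> ?T = {}" by auto
  ultimately show ?thesis unfolding asc_def eq
    by (subst card_Un_disjoint) (use fin in auto)
qed

lemma zeros_snoc: "zeros (w @ [x]) = zeros w + (if x = 0 then 1 else 0)"
  by (simp add: zeros_def)

lemma ascent_seq_snoc:
  assumes "w \<noteq> []"
  shows "ascent_seq (w @ [x]) \<longleftrightarrow> ascent_seq w \<and> x \<le> 1 + asc w"
proof
  assume a: "ascent_seq (w @ [x])"
  have "w ! 0 = 0" using a assms by (auto simp: ascent_seq_def nth_append)
  moreover have "w ! i \<le> 1 + asc (take i w)" if "1 \<le> i" "i < length w" for i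
    using a that unfolding ascent_seq_def
    by (auto simp: nth_append dest!: spec[of _ i])
  moreover have "x \<le> 1 + asc w"
  proof -
    have "1 \<le> length w" using assms by (cases w) auto
    thus ?thesis using a unfolding ascent_seq_def
      by (auto dest!: spec[of _ "length w"])
  qed
  ultimately show "ascent_seq w \<and> x \<le> 1 + asc w" using assms by (auto simp: ascent_seq_def)
next
  assume a: "ascent_seq w \<and> x \<le> 1 + asc w"
  show "ascent_seq (w @ [x])" unfolding ascent_seq_def
  proof (intro conjI allI impI)
    show "w @ [x] \<noteq> []" by simp
    show "(w @ [x]) ! 0 = 0" using a assms by (auto simp: ascent_seq_def nth_append)
    fix i assume i: "1 \<le> i \<and> i < length (w @ [x])"
    show "(w @ [x]) ! i \<le> 1 + asc (take i (w @ [x]))"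
    proof (cases "i < length w")
      case True thus ?thesis using a i by (auto simp: ascent_seq_def nth_append)
    next
      case False
      hence "i = length w" using i by auto
      thus ?thesis using a by (auto simp: nth_append)
    qed
  qed
qed

lemma last_le_asc:
  assumes "ascent_seq w" "length w \<ge> 2"
  shows "last w \<le> 1 + asc w"
proof -
  have ne: "butlast w \<noteq> []" using assms(2) by (cases w rule: rev_cases) auto
  have w: "w = butlast w @ [last w]" using assms(2) by (cases w rule: rev_cases) auto
  have "ascent_seq (butlast w @ [last w])" using assms(1) w by simp
  hence "last w \<le> 1 + asc (butlast w)" using ascent_seq_snoc[OF ne] by blast
  moreover have "asc (butlast w) \<le> asc w" using asc_snoc[OF ne, of "last w"] w by simp
  ultimately show ?thesis by simp
qed

lemma AS_r_small: "n < r + 1 \<Longrightarrow> AS_r r n = {}"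
  by (auto simp: AS_r_def)

lemma AS_r_base:
  assumes "r \<ge> 1"
  shows "AS_r r (r+1) = {replicate r 0 @ [1]}"
proof (rule set_eqI, rule iffI)
  fix w assume "w \<in> AS_r r (r+1)"
  hence w: "length w = r + 1" "\<forall>i<r. w ! i = 0" "w ! r = 1" by (auto simp: AS_r_def)
  show "w \<in> {replicate r 0 @ [1]}"
    using w by (auto intro!: nth_equalityI simp: nth_append less_Suc_eq)
next
  fix w assume "w \<in> {replicate r 0 @ [1::nat]}"
  hence w: "w = replicate r 0 @ [1]" by simp
  have ne: "replicate r (0::nat) \<noteq> []" using assms by simp
  have "ascent_seq (replicate r (0::nat))" using assms by (auto simp: ascent_seq_def)
  hence "ascent_seq w" using w ascent_seq_snoc[OF ne] by simp
  thus "w \<in> AS_r r (r+1)" using w by (auto simp: AS_r_def nth_append)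
qed

lemma AS_r_step:
  assumes "r \<ge> 1" "m \<ge> r + 1"
  shows "AS_r r (Suc m) = (\<lambda>(w,x). w @ [x]) ` (SIGMA w:AS_r r m. {0..1 + asc w})"
proof (rule set_eqI, rule iffI)
  fix w' assume a: "w' \<in> AS_r r (Suc m)"
  hence len: "length w' = Suc m" by (auto simp: AS_r_def)
  define w where "w = butlast w'"
  define x where "x = last w'"
  have w': "w' = w @ [x]" using len unfolding w_def x_def by (cases w' rule: rev_cases) auto
  have ne: "w \<noteq> []" using len assms unfolding w_def by (cases w' rule: rev_cases) auto
  have lw: "length w = m" using len w' by simp
  have "ascent_seq w \<and> x \<le> 1 + asc w" using a w' ascent_seq_snoc[OF ne] by (auto simp: AS_r_def)
  moreover have "\<forall>i<r. w ! i = 0" "w ! r = 1" using a w' lw assms by (auto simp: AS_r_def nth_append)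
  ultimately have "w \<in> AS_r r m" "x \<in> {0..1 + asc w}" using lw assms by (auto simp: AS_r_def)
  thus "w' \<in> (\<lambda>(w,x). w @ [x]) ` (SIGMA w:AS_r r m. {0..1 + asc w})" using w' by force
next
  fix w' assume "w' \<in> (\<lambda>(w,x). w @ [x]) ` (SIGMA w:AS_r r m. {0..1 + asc w})"
  then obtain w x where w': "w' = w @ [x]" and w: "w \<in> AS_r r m" and x: "x \<le> 1 + asc w" by auto
  have lw: "length w = m" using w by (auto simp: AS_r_def)
  have ne: "w \<noteq> []" using lw assms by auto
  show "w' \<in> AS_r r (Suc m)" using w x lw assms ascent_seq_snoc[OF ne, of x]
    unfolding w' by (auto simp: AS_r_def nth_append)
qed

lemma AS_r_finite:
  assumes "r \<ge> 1"
  shows "finite (AS_r r n)"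
proof (cases "n < r + 1")
  case True thus ?thesis by (simp add: AS_r_small)
next
  case False
  hence "r + 1 \<le> n" by simp
  thus ?thesis
  proof (induction n rule: dec_induct)
    case base thus ?case using AS_r_base[OF assms] by simp
  next
    case (step m)
    thus ?case using AS_r_step[OF assms, of m] by simp
  qed
qed


lemma geo_part:
  fixes u v z :: "'a::comm_ring_1"
  shows "(v - 1) * (\<Sum>x=0..c. u ^ (a + (if l < x then 1 else 0)) * v ^ x * z ^ (k + (if x = 0 then 1 else 0)))
    = u^a * z^k * ((v-1)*z - v + v^(min c l + 1)) + u^(a+1) * z^k * (v^(c+1) - v^(min c l + 1))"
proof (induction c)
  case 0 thus ?case by (simp add: algebra_simps)
next
  case (Suc c)
  show ?case
  proof (cases "Suc c \<le> l")
    case True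
    hence m: "min (Suc c) l = Suc c" "min c l = c" by auto
    show ?thesis using Suc.IH True unfolding sum.atLeast0_atMost_Suc m
      by (simp add: algebra_simps)
  next
    case False
    hence m: "min (Suc c) l = l" "min c l = l" by auto
    show ?thesis using Suc.IH False unfolding sum.atLeast0_atMost_Suc m
      by (simp add: algebra_simps)
  qed
qed

lemma per_w:
  fixes u v z :: "'a::comm_ring_1"
  assumes "l \<le> a + 1"
  shows "(v - 1) * (\<Sum>x=0..1+a. u ^ (a + (if l < x then 1 else 0)) * v ^ x * z ^ (k + (if x = 0 then 1 else 0)))
     - v * (1 - u) * (u ^ a * v ^ l * z ^ k)
    = ((v - 1) * z - v) * (u ^ a * 1 ^ l * z ^ k) + u * v ^ 2 * ((u * v) ^ a * 1 ^ l * z ^ k)"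
proof -
  have "min (1+a) l = l" using assms by simp
  thus ?thesis unfolding geo_part by (simp add: algebra_simps power_mult_distrib power2_eq_square)
qed


lemma G_nth: "fps_nth (G r u v z) n = (\<Sum>w\<in>AS_r r n. u ^ asc w * v ^ last w * z ^ zeros w)"
  by (simp add: G_def)

lemma G_step:
  fixes u v z :: "'a::comm_ring_1"
  assumes "r \<ge> 1" "m \<ge> r + 1"
  shows "fps_nth (G r u v z) (Suc m) = (\<Sum>w\<in>AS_r r m. \<Sum>x=0..1+asc w.
     u ^ (asc w + (if last w < x then 1 else 0)) * v ^ x * z ^ (zeros w + (if x = 0 then 1 else 0)))"
proof -
  have ne: "w \<noteq> []" if "w \<in> AS_r r m" for w using that assms by (auto simp: AS_r_def)
  have inj: "inj_on (\<lambda>(w,x). w @ [x]) (SIGMA w:AS_r r m. {0..1 + asc w})"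
    by (auto simp: inj_on_def)
  have "fps_nth (G r u v z) (Suc m) = (\<Sum>p\<in>(SIGMA w:AS_r r m. {0..1 + asc w}).
      u ^ asc (fst p @ [snd p]) * v ^ last (fst p @ [snd p]) * z ^ zeros (fst p @ [snd p]))"
    unfolding G_nth AS_r_step[OF assms] sum.reindex[OF inj]
    by (simp add: case_prod_beta)
  also have "\<dots> = (\<Sum>w\<in>AS_r r m. \<Sum>x=0..1+asc w.
      u ^ asc (w @ [x]) * v ^ last (w @ [x]) * z ^ zeros (w @ [x]))"
    using sum.Sigma[of "AS_r r m" "\<lambda>w. {0..1+asc w}"
        "\<lambda>w x. u ^ asc (w @ [x]) * v ^ last (w @ [x]) * z ^ zeros (w @ [x])"]
    by (simp add: AS_r_finite[OF assms(1)] case_prod_beta)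
  also have "\<dots> = (\<Sum>w\<in>AS_r r m. \<Sum>x=0..1+asc w.
     u ^ (asc w + (if last w < x then 1 else 0)) * v ^ x * z ^ (zeros w + (if x = 0 then 1 else 0)))"
    by (intro sum.cong refl) (simp add: asc_snoc ne zeros_snoc)
  finally show ?thesis .
qed


theorem lemma2:
  fixes u v z :: "'a::comm_ring_1" and r :: nat
  assumes "r \<ge> 1"
  shows "(fps_const (v - 1) - fps_X * fps_const (v * (1 - u))) * G r u v z
         = fps_const ((v - 1) * u * v * z ^ r) * fps_X ^ (r + 1)
           + fps_X * fps_const ((v - 1) * z - v) * G r u 1 z
           + fps_X * fps_const (u * v ^ 2) * G r (u * v) 1 z"
proof (rule fps_ext)
  fix n
  let ?L = "(fps_const (v - 1) - fps_X * fps_const (v * (1 - u))) * G r u v z"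
  let ?R = "fps_const ((v - 1) * u * v * z ^ r) * fps_X ^ (r + 1)
           + fps_X * fps_const ((v - 1) * z - v) * G r u 1 z
           + fps_X * fps_const (u * v ^ 2) * G r (u * v) 1 z"
  have L: "?L = fps_const (v - 1) * G r u v z - fps_X * (fps_const (v * (1 - u)) * G r u v z)"
    by (simp add: algebra_simps)
  have R: "?R = fps_const ((v - 1) * u * v * z ^ r) * fps_X ^ (r + 1)
           + fps_X * (fps_const ((v - 1) * z - v) * G r u 1 z)
           + fps_X * (fps_const (u * v ^ 2) * G r (u * v) 1 z)"
    by (simp add: mult.assoc)
  have G0: "fps_nth (G r a b c) k = 0" if "k < r + 1" for a b c :: 'a and k
    using that by (simp add: G_nth AS_r_small)
  show "fps_nth ?L n = fps_nth ?R n"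
  proof (cases n)
    case 0
    thus ?thesis unfolding L R using G0 assms by simp
  next
    case (Suc m)
    have Ln: "fps_nth ?L n = (v - 1) * fps_nth (G r u v z) (Suc m) - v * (1 - u) * fps_nth (G r u v z) m"
      unfolding L Suc by simp
    have Rn: "fps_nth ?R n = (if Suc m = r + 1 then (v - 1) * u * v * z ^ r else 0)
       + ((v - 1) * z - v) * fps_nth (G r u 1 z) m + u * v ^ 2 * fps_nth (G r (u * v) 1 z) m"
      unfolding R Suc by simp
    consider "m < r" | "m = r" | "m \<ge> r + 1" by linarith
    thus ?thesis
    proof cases
      case 1 thus ?thesis unfolding Ln Rn using G0 by simp
    next
      case 2
      have "asc (replicate r 0 @ [1::nat]) = 1"
      proof -
        have "asc (replicate r (0::nat)) = 0"
          unfolding asc_def by (rule trans[OF arg_cong[of _ "{}" card]]) auto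
        thus ?thesis using asc_snoc[of "replicate r (0::nat)" 1] assms by simp
      qed
      moreover have "zeros (replicate r 0 @ [1::nat]) = r" by (simp add: zeros_def)
      ultimately have "fps_nth (G r u v z) (Suc m) = u * v * z ^ r"
        using 2 AS_r_base[OF assms] by (simp add: G_nth)
      thus ?thesis unfolding Ln Rn using G0 2 by (simp add: algebra_simps)
    next
      case 3
      have lw: "last w \<le> asc w + 1" if "w \<in> AS_r r m" for w
        using last_le_asc[of w] that assms 3 by (auto simp: AS_r_def)
      have "fps_nth ?L n = (\<Sum>w\<in>AS_r r m. (v - 1) * (\<Sum>x=0..1+asc w.
         u ^ (asc w + (if last w < x then 1 else 0)) * v ^ x * z ^ (zeros w + (if x = 0 then 1 else 0)))
         - v * (1 - u) * (u ^ asc w * v ^ last w * z ^ zeros w))"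
        unfolding Ln G_step[OF assms 3] unfolding G_nth sum_subtractf sum_distrib_left ..
      also have "\<dots> = (\<Sum>w\<in>AS_r r m. ((v - 1) * z - v) * (u ^ asc w * 1 ^ last w * z ^ zeros w)
           + u * v ^ 2 * ((u * v) ^ asc w * 1 ^ last w * z ^ zeros w))"
        by (intro sum.cong refl per_w lw)
      also have "\<dots> = fps_nth ?R n"
        unfolding Rn G_nth sum.distrib sum_distrib_left using 3 by simp
      finally show ?thesis .
    qed
  qed
qed

end
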